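(* Let $A$ be a commutative subalgebra of a $K$-algebra $E$, $A'$ a non-empty subset of $A$, $\Delta=\{\mathrm{ad}_a\mid a\in A'\}$, and $R$ a subalgebra of $N_\Delta(E)$ with $A\subseteq R$. Then: (1) $R$ is a $\Delta$-locally nilpotent algebra and $\{R_i=R\cap N_\Delta(E)_i\}_{i\geq0}$ is its $\Delta$-order filtration. (2) If $\mathfrak{a}$ is a nonzero ideal of $R$, then $\mathfrak{a}_0=\mathfrak{a}\cap R_0=\mathfrak{a}\cap R^\Delta$ is a nonzero ideal of $R_0=R^\Delta\supseteq A$ such that $R\mathfrak{a}_0R\cap R_0=\mathfrak{a}_0$. (3) If, in addition, $R_0=R^\Delta$ is commutative, then $[R_1,\mathfrak{a}_0]\subseteq\mathfrak{a}_0$.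
   Context: $\mathrm{ad}_a(f)=af-fa$. For $i\ge1$, $\Delta^i=\{\delta_1\cdots\delta_i\mid\delta_j\in\Delta\}$. For an algebra $B$ on which $\Delta$ acts by derivations, $N_\Delta(B)_i=\{b\in B\mid\Delta^{i+1}b=0\}$ ($i\ge0$), $N_\Delta(B)=\bigcup_iN_\Delta(B)_i$; $B$ is $\Delta$-locally nilpotent if $B=N_\Delta(B)$, and then $\{N_\Delta(B)_i\}_{i\ge0}$ is its $\Delta$-order filtration. $B^\Delta=\bigcap_{\delta\in\Delta}\ker\delta$. *)

theory Defs
  imports Main
begin

definition k_algebra :: "('k::field \<Rightarrow> 'e::ring_1 \<Rightarrow> 'e) \<Rightarrow> bool" where
  "k_algebra sc \<longleftrightarrow>
     (\<forall>a b x. sc (a + b) x = sc a x + sc b x) \<and>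
     (\<forall>a x y. sc a (x + y) = sc a x + sc a y) \<and>
     (\<forall>a b x. sc (a * b) x = sc a (sc b x)) \<and>
     (\<forall>x. sc 1 x = x) \<and>
     (\<forall>a x y. sc a (x * y) = sc a x * y) \<and>
     (\<forall>a x y. sc a (x * y) = x * sc a y)"

definition subalgebra :: "('k::field \<Rightarrow> 'e::ring_1 \<Rightarrow> 'e) \<Rightarrow> 'e set \<Rightarrow> bool" where
  "subalgebra sc B \<longleftrightarrow> 0 \<in> B \<and> 1 \<in> B \<and>
     (\<forall>x\<in>B. \<forall>y\<in>B. x + y \<in> B) \<and> (\<forall>x\<in>B. \<forall>y\<in>B. x * y \<in> B) \<and>
     (\<forall>k. \<forall>x\<in>B. sc k x \<in> B)"

definition commutative_set :: "'e::ring_1 set \<Rightarrow> bool" where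
  "commutative_set B \<longleftrightarrow> (\<forall>x\<in>B. \<forall>y\<in>B. x * y = y * x)"

definition alg_ideal :: "('k::field \<Rightarrow> 'e::ring_1 \<Rightarrow> 'e) \<Rightarrow> 'e set \<Rightarrow> 'e set \<Rightarrow> bool" where
  "alg_ideal sc I B \<longleftrightarrow> I \<subseteq> B \<and> 0 \<in> I \<and>
     (\<forall>x\<in>I. \<forall>y\<in>I. x + y \<in> I) \<and> (\<forall>x\<in>I. - x \<in> I) \<and>
     (\<forall>k. \<forall>x\<in>I. sc k x \<in> I) \<and>
     (\<forall>r\<in>B. \<forall>x\<in>I. r * x \<in> I \<and> x * r \<in> I)"

definition ad :: "'e::ring_1 \<Rightarrow> 'e \<Rightarrow> 'e" where
  "ad a f = a * f - f * a"

text \<open>Application of an element \<open>\<delta>\<^sub>1\<cdots>\<delta>\<^sub>i\<close> of \<open>\<Delta>\<^sup>i\<close>, given as a list.\<close>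
definition comp_list :: "('e \<Rightarrow> 'e) list \<Rightarrow> 'e \<Rightarrow> 'e" where
  "comp_list ds = foldr (\<circ>) ds id"

definition Delta_pow_kills :: "('e::ring_1 \<Rightarrow> 'e) set \<Rightarrow> nat \<Rightarrow> 'e \<Rightarrow> bool" where
  "Delta_pow_kills \<Delta> i b \<longleftrightarrow>
     (\<forall>ds. set ds \<subseteq> \<Delta> \<and> length ds = i \<longrightarrow> comp_list ds b = 0)"

definition N_i :: "('e::ring_1 \<Rightarrow> 'e) set \<Rightarrow> 'e set \<Rightarrow> nat \<Rightarrow> 'e set" where
  "N_i \<Delta> B i = {b \<in> B. Delta_pow_kills \<Delta> (Suc i) b}"

definition N_Delta :: "('e::ring_1 \<Rightarrow> 'e) set \<Rightarrow> 'e set \<Rightarrow> 'e set" where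
  "N_Delta \<Delta> B = (\<Union>i. N_i \<Delta> B i)"

definition invariants :: "('e::ring_1 \<Rightarrow> 'e) set \<Rightarrow> 'e set \<Rightarrow> 'e set" where
  "invariants \<Delta> B = {b \<in> B. \<forall>\<delta>\<in>\<Delta>. \<delta> b = 0}"

definition acts_by_derivations ::
  "('k::field \<Rightarrow> 'e::ring_1 \<Rightarrow> 'e) \<Rightarrow> ('e \<Rightarrow> 'e) set \<Rightarrow> 'e set \<Rightarrow> bool" where
  "acts_by_derivations sc \<Delta> B \<longleftrightarrow> (\<forall>\<delta>\<in>\<Delta>.
     (\<forall>x\<in>B. \<delta> x \<in> B) \<and>
     (\<forall>x\<in>B. \<forall>y\<in>B. \<delta> (x + y) = \<delta> x + \<delta> y) \<and>
     (\<forall>k. \<forall>x\<in>B. \<delta> (sc k x) = sc k (\<delta> x)) \<and>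
     (\<forall>x\<in>B. \<forall>y\<in>B. \<delta> (x * y) = \<delta> x * y + x * \<delta> y))"

definition locally_nilpotent ::
  "('k::field \<Rightarrow> 'e::ring_1 \<Rightarrow> 'e) \<Rightarrow> ('e \<Rightarrow> 'e) set \<Rightarrow> 'e set \<Rightarrow> bool" where
  "locally_nilpotent sc \<Delta> B \<longleftrightarrow> acts_by_derivations sc \<Delta> B \<and> B = N_Delta \<Delta> B"

definition two_sided_prod :: "'e::ring_1 set \<Rightarrow> 'e set \<Rightarrow> 'e set" where
  "two_sided_prod R X = {(\<Sum>j<n. r j * x j * s j) | (n::nat) r x s.
      \<forall>j<n. r j \<in> R \<and> x j \<in> X \<and> s j \<in> R}"

end

theory Submission
  imports Defs
begin

lemma sc_zero: assumes "k_algebra sc" shows "sc k 0 = 0"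
proof -
  have "sc k (0+0) = sc k 0 + sc k 0" using assms unfolding k_algebra_def by blast
  thus ?thesis by simp
qed

lemma sc_diff: assumes "k_algebra sc" shows "sc k (x - y) = sc k x - sc k y"
proof -
  have "sc k ((x - y) + y) = sc k (x - y) + sc k y" using assms unfolding k_algebra_def by blast
  thus ?thesis by (simp add: algebra_simps)
qed

lemma sc_neg1: assumes "k_algebra sc" shows "sc (-1) x = - x"
proof -
  have z: "sc (0+0) x = sc 0 x + sc 0 x" using assms unfolding k_algebra_def by blast
  hence z0: "sc 0 x = 0" by simp
  have "sc (1 + -1) x = sc 1 x + sc (-1) x" using assms unfolding k_algebra_def by blast
  moreover have "sc 1 x = x" using assms unfolding k_algebra_def by blast
  ultimately have "x + sc (-1) x = 0" using z0 by simp
  thus ?thesis by (simp add: add_eq_0_iff)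
qed

lemma sub_neg: assumes "k_algebra sc" "subalgebra sc B" "x \<in> B" shows "- x \<in> B"
  using assms sc_neg1[OF assms(1), of x] unfolding subalgebra_def by metis

lemma sub_diff: assumes "k_algebra sc" "subalgebra sc B" "x \<in> B" "y \<in> B" shows "x - y \<in> B"
proof -
  have "- y \<in> B" using sub_neg assms by blast
  thus ?thesis using assms unfolding subalgebra_def by (metis diff_conv_add_uminus)
qed

lemma sub_mul: "subalgebra sc B \<Longrightarrow> x \<in> B \<Longrightarrow> y \<in> B \<Longrightarrow> x * y \<in> B"
  unfolding subalgebra_def by blast

lemma id_diff: assumes "alg_ideal sc I B" "x \<in> I" "y \<in> I" shows "x - y \<in> I"
  using assms unfolding alg_ideal_def by (metis diff_conv_add_uminus)

lemma id_ad: assumes "alg_ideal sc I B" "a \<in> B" "x \<in> I" shows "ad a x \<in> I"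
  unfolding ad_def using assms id_diff[OF assms(1)] unfolding alg_ideal_def by blast

lemma comp_list_Cons: "comp_list (d # ds) x = d (comp_list ds x)"
  unfolding comp_list_def by simp

lemma comp_list_Nil: "comp_list [] x = x"
  unfolding comp_list_def by simp

lemma id_comp: assumes "alg_ideal sc I B" "set ds \<subseteq> ad ` S" "S \<subseteq> B" "x \<in> I"
  shows "comp_list ds x \<in> I"
  using assms(2) proof (induction ds)
  case Nil then show ?case using assms by (simp add: comp_list_Nil)
next
  case (Cons d ds)
  then obtain a where "a \<in> S" "d = ad a" by auto
  then show ?case using Cons id_ad[OF assms(1)] assms(3) by (auto simp: comp_list_Cons)
qed

lemma N0_eq: "R \<inter> N_i \<Delta> UNIV 0 = invariants \<Delta> R"
proof -
  have "Delta_pow_kills \<Delta> (Suc 0) b \<longleftrightarrow> (\<forall>\<delta>\<in>\<Delta>. \<delta> b = 0)" for b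
  proof
    assume "Delta_pow_kills \<Delta> (Suc 0) b"
    show "\<forall>\<delta>\<in>\<Delta>. \<delta> b = 0"
    proof
      fix \<delta> assume d: "\<delta> \<in> \<Delta>"
      have "comp_list [\<delta>] b = 0" using \<open>Delta_pow_kills \<Delta> (Suc 0) b\<close> d
        unfolding Delta_pow_kills_def by simp
      thus "\<delta> b = 0" by (simp add: comp_list_Cons comp_list_Nil)
    qed
  next
    assume h: "\<forall>\<delta>\<in>\<Delta>. \<delta> b = 0"
    show "Delta_pow_kills \<Delta> (Suc 0) b" unfolding Delta_pow_kills_def
    proof (intro allI impI)
      fix ds :: "('a \<Rightarrow> 'a) list" assume "set ds \<subseteq> \<Delta> \<and> length ds = Suc 0"
      hence l: "length ds = Suc 0" and sd: "set ds \<subseteq> \<Delta>" by auto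
      from l obtain d where "ds = [d]" by (metis length_0_conv length_Suc_conv)
      moreover with sd have "d \<in> \<Delta>" by simp
      ultimately have "ds = [d]" "d \<in> \<Delta>" by auto
      thus "comp_list ds b = 0" using h by (simp add: comp_list_Cons comp_list_Nil)
    qed
  qed
  thus ?thesis unfolding N_i_def invariants_def by auto
qed

lemma N1_kill: assumes "x \<in> N_i \<Delta> UNIV 1" "d \<in> \<Delta>" "e \<in> \<Delta>" shows "e (d x) = 0"
proof -
  have "Delta_pow_kills \<Delta> 2 x" using assms(1) unfolding N_i_def by (simp add: numeral_2_eq_2)
  hence "comp_list [e, d] x = 0" using assms unfolding Delta_pow_kills_def by auto
  thus ?thesis by (simp add: comp_list_Cons comp_list_Nil)
qed

theorem corollary2p1:
  fixes sc :: "'k::field \<Rightarrow> 'e::ring_1 \<Rightarrow> 'e"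
    and A A' R :: "'e set"
  defines "\<Delta> \<equiv> ad ` A'"
  assumes alg: "k_algebra sc"
    and A_sub: "subalgebra sc A" and A_comm: "commutative_set A"
    and A'_ne: "A' \<noteq> {}" and A'_A: "A' \<subseteq> A"
    and R_sub: "subalgebra sc R" and R_N: "R \<subseteq> N_Delta \<Delta> UNIV"
    and A_R: "A \<subseteq> R"
  shows "locally_nilpotent sc \<Delta> R \<and>
         (\<forall>i. N_i \<Delta> R i = R \<inter> N_i \<Delta> UNIV i) \<and>
         (\<forall>\<aa>. alg_ideal sc \<aa> R \<longrightarrow> \<aa> \<noteq> {0} \<longrightarrow>
           \<aa> \<inter> (R \<inter> N_i \<Delta> UNIV 0) = \<aa> \<inter> invariants \<Delta> R \<and>
           R \<inter> N_i \<Delta> UNIV 0 = invariants \<Delta> R \<and>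
           A \<subseteq> invariants \<Delta> R \<and>
           alg_ideal sc (\<aa> \<inter> invariants \<Delta> R) (invariants \<Delta> R) \<and>
           \<aa> \<inter> invariants \<Delta> R \<noteq> {0} \<and>
           two_sided_prod R (\<aa> \<inter> invariants \<Delta> R) \<inter> invariants \<Delta> R
             = \<aa> \<inter> invariants \<Delta> R) \<and>
         (\<forall>\<aa>. alg_ideal sc \<aa> R \<longrightarrow> \<aa> \<noteq> {0} \<longrightarrow>
           commutative_set (invariants \<Delta> R) \<longrightarrow>
           (\<forall>x \<in> R \<inter> N_i \<Delta> UNIV 1. \<forall>y \<in> \<aa> \<inter> invariants \<Delta> R.
              x * y - y * x \<in> \<aa> \<inter> invariants \<Delta> R))"
proof -
  have A'R: "A' \<subseteq> R" using A'_A A_R by blast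
  have Ni: "N_i \<Delta> R i = R \<inter> N_i \<Delta> UNIV i" for i unfolding N_i_def by auto
  have adR: "ad a x \<in> R" if "a \<in> R" "x \<in> R" for a x
    unfolding ad_def using sub_diff[OF alg R_sub sub_mul[OF R_sub] sub_mul[OF R_sub]] that by simp
  have ad_add: "ad a (x + y) = ad a x + ad a y" for a x y :: 'e
    unfolding ad_def by (simp add: algebra_simps)
  have ad_sc: "ad a (sc k x) = sc k (ad a x)" for a x k
    unfolding ad_def using alg sc_diff[OF alg] unfolding k_algebra_def by metis
  have ad_mul: "ad a (x * y) = ad a x * y + x * ad a y" for a x y :: 'e
    unfolding ad_def by (simp add: algebra_simps)
  have ad_neg: "ad a (- x) = - ad a x" for a x :: 'e
    unfolding ad_def by (simp add: algebra_simps)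
  have ad_0: "ad a 0 = 0" for a :: 'e unfolding ad_def by simp
  have der: "acts_by_derivations sc \<Delta> R"
    unfolding acts_by_derivations_def
  proof
    fix \<delta> assume "\<delta> \<in> \<Delta>"
    then obtain a where a: "a \<in> A'" "\<delta> = ad a" unfolding \<Delta>_def by blast
    have "a \<in> R" using a A'R by blast
    then show "(\<forall>x\<in>R. \<delta> x \<in> R) \<and>
     (\<forall>x\<in>R. \<forall>y\<in>R. \<delta> (x + y) = \<delta> x + \<delta> y) \<and>
     (\<forall>k. \<forall>x\<in>R. \<delta> (sc k x) = sc k (\<delta> x)) \<and>
     (\<forall>x\<in>R. \<forall>y\<in>R. \<delta> (x * y) = \<delta> x * y + x * \<delta> y)"
      using a adR ad_add ad_sc ad_mul by simp
  qed
  have LN: "R = N_Delta \<Delta> R"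
    using R_N unfolding N_Delta_def Ni by blast
  have P2: "\<aa> \<inter> (R \<inter> N_i \<Delta> UNIV 0) = \<aa> \<inter> invariants \<Delta> R \<and>
           R \<inter> N_i \<Delta> UNIV 0 = invariants \<Delta> R \<and>
           A \<subseteq> invariants \<Delta> R \<and>
           alg_ideal sc (\<aa> \<inter> invariants \<Delta> R) (invariants \<Delta> R) \<and>
           \<aa> \<inter> invariants \<Delta> R \<noteq> {0} \<and>
           two_sided_prod R (\<aa> \<inter> invariants \<Delta> R) \<inter> invariants \<Delta> R
             = \<aa> \<inter> invariants \<Delta> R"
    if I: "alg_ideal sc \<aa> R" and nz: "\<aa> \<noteq> {0}" for \<aa>
  proof (intro conjI)
    show "\<aa> \<inter> (R \<inter> N_i \<Delta> UNIV 0) = \<aa> \<inter> invariants \<Delta> R" using N0_eq by metis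
    show "R \<inter> N_i \<Delta> UNIV 0 = invariants \<Delta> R" using N0_eq by metis
    show "A \<subseteq> invariants \<Delta> R"
      unfolding invariants_def \<Delta>_def ad_def using A_R A'_A A_comm unfolding commutative_set_def by auto
    have aR: "\<aa> \<subseteq> R" using I unfolding alg_ideal_def by blast
    show "alg_ideal sc (\<aa> \<inter> invariants \<Delta> R) (invariants \<Delta> R)"
      unfolding alg_ideal_def
    proof (intro conjI ballI allI)
      show "\<aa> \<inter> invariants \<Delta> R \<subseteq> invariants \<Delta> R" by blast
      show "0 \<in> \<aa> \<inter> invariants \<Delta> R" using I aR ad_0 unfolding alg_ideal_def invariants_def \<Delta>_def by auto
      fix x assume x: "x \<in> \<aa> \<inter> invariants \<Delta> R"
      { fix y assume y: "y \<in> \<aa> \<inter> invariants \<Delta> R"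
        show "x + y \<in> \<aa> \<inter> invariants \<Delta> R"
          using x y I aR ad_add unfolding alg_ideal_def invariants_def \<Delta>_def by auto }
      show "- x \<in> \<aa> \<inter> invariants \<Delta> R"
          using x I aR ad_neg unfolding alg_ideal_def invariants_def \<Delta>_def by auto
      { fix k show "sc k x \<in> \<aa> \<inter> invariants \<Delta> R"
          using x I aR ad_sc sc_zero[OF alg] unfolding alg_ideal_def invariants_def \<Delta>_def by auto }
      { fix r assume r: "r \<in> invariants \<Delta> R"
        show "r * x \<in> \<aa> \<inter> invariants \<Delta> R"
          using x r I aR ad_mul unfolding alg_ideal_def invariants_def \<Delta>_def by auto
        show "x * r \<in> \<aa> \<inter> invariants \<Delta> R"
          using x r I aR ad_mul unfolding alg_ideal_def invariants_def \<Delta>_def by auto }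
    qed
    have ex: "\<forall>x\<in>\<aa>. x \<noteq> 0 \<longrightarrow> Delta_pow_kills \<Delta> n x \<longrightarrow> (\<exists>y\<in>\<aa> \<inter> invariants \<Delta> R. y \<noteq> 0)" for n
    proof (induction n)
      case 0 then show ?case unfolding Delta_pow_kills_def
        using comp_list_Nil by (metis empty_subsetI list.set(1) list.size(3))
    next
      case (Suc n)
      show ?case
      proof (intro ballI impI)
        fix x assume x: "x \<in> \<aa>" "x \<noteq> 0" and k: "Delta_pow_kills \<Delta> (Suc n) x"
        show "\<exists>y\<in>\<aa> \<inter> invariants \<Delta> R. y \<noteq> 0"
        proof (cases "Delta_pow_kills \<Delta> n x")
          case True then show ?thesis using Suc x by blast
        next
          case False
          then obtain ds where ds: "set ds \<subseteq> \<Delta>" "length ds = n" "comp_list ds x \<noteq> 0"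
            unfolding Delta_pow_kills_def by blast
          have yI: "comp_list ds x \<in> \<aa>" using id_comp[OF I _ A'R x(1)] ds(1) unfolding \<Delta>_def by blast
          have "\<forall>\<delta>\<in>\<Delta>. \<delta> (comp_list ds x) = 0"
          proof
            fix \<delta> assume "\<delta> \<in> \<Delta>"
            hence "comp_list (\<delta> # ds) x = 0" using k ds unfolding Delta_pow_kills_def by simp
            thus "\<delta> (comp_list ds x) = 0" by (simp add: comp_list_Cons)
          qed
          thus ?thesis using yI aR ds(3) unfolding invariants_def by blast
        qed
      qed
    qed
    obtain x where x: "x \<in> \<aa>" "x \<noteq> 0" using nz I unfolding alg_ideal_def by blast
    then obtain n where "x \<in> N_i \<Delta> UNIV n" using R_N aR unfolding N_Delta_def by blast
    hence "Delta_pow_kills \<Delta> (Suc n) x" unfolding N_i_def by simp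
    then obtain y where "y \<in> \<aa> \<inter> invariants \<Delta> R" "y \<noteq> 0" using ex x by blast
    thus "\<aa> \<inter> invariants \<Delta> R \<noteq> {0}" by blast
    have sumI: "(\<Sum>j<n. r j * x j * s j) \<in> \<aa>" if "\<forall>j<n. r j \<in> R \<and> x j \<in> \<aa> \<inter> invariants \<Delta> R \<and> s j \<in> R"
      for n :: nat and r x s :: "nat \<Rightarrow> 'e" using that
    proof (induction n)
      case 0 then show ?case using I unfolding alg_ideal_def by simp
    next
      case (Suc n)
      have "r n * x n * s n \<in> \<aa>" using Suc.prems I unfolding alg_ideal_def by simp
      moreover have "(\<Sum>j<n. r j * x j * s j) \<in> \<aa>" using Suc by simp
      ultimately show ?case using I unfolding alg_ideal_def by simp
    qed
    show "two_sided_prod R (\<aa> \<inter> invariants \<Delta> R) \<inter> invariants \<Delta> R = \<aa> \<inter> invariants \<Delta> R"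
    proof
      show "two_sided_prod R (\<aa> \<inter> invariants \<Delta> R) \<inter> invariants \<Delta> R \<subseteq> \<aa> \<inter> invariants \<Delta> R"
      proof
        fix w assume w: "w \<in> two_sided_prod R (\<aa> \<inter> invariants \<Delta> R) \<inter> invariants \<Delta> R"
        then obtain n :: nat and r x s :: "nat \<Rightarrow> 'e" where "w = (\<Sum>j<n. r j * x j * s j)"
          "\<forall>j<n. r j \<in> R \<and> x j \<in> \<aa> \<inter> invariants \<Delta> R \<and> s j \<in> R"
          unfolding two_sided_prod_def by auto
        hence "w \<in> \<aa>" using sumI by simp
        thus "w \<in> \<aa> \<inter> invariants \<Delta> R" using w by simp
      qed
      show "\<aa> \<inter> invariants \<Delta> R \<subseteq> two_sided_prod R (\<aa> \<inter> invariants \<Delta> R) \<inter> invariants \<Delta> R"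
      proof
        fix z assume z: "z \<in> \<aa> \<inter> invariants \<Delta> R"
        have one: "(1::'e) \<in> R" using R_sub unfolding subalgebra_def by simp
        have "\<exists>(n::nat) r x s. z = (\<Sum>j<n. r j * x j * s j) \<and>
           (\<forall>j<n. r j \<in> R \<and> x j \<in> \<aa> \<inter> invariants \<Delta> R \<and> s j \<in> R)"
          apply (rule exI[of _ 1], rule exI[of _ "\<lambda>_. 1"], rule exI[of _ "\<lambda>_. z"], rule exI[of _ "\<lambda>_. 1"])
          using z one by simp
        hence "z \<in> two_sided_prod R (\<aa> \<inter> invariants \<Delta> R)"
          unfolding two_sided_prod_def by (simp only: mem_Collect_eq)
        thus "z \<in> two_sided_prod R (\<aa> \<inter> invariants \<Delta> R) \<inter> invariants \<Delta> R" using z by blast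
      qed
    qed
  qed
  have P3: "x * y - y * x \<in> \<aa> \<inter> invariants \<Delta> R"
    if I: "alg_ideal sc \<aa> R" and C: "commutative_set (invariants \<Delta> R)"
      and x: "x \<in> R \<inter> N_i \<Delta> UNIV 1" and y: "y \<in> \<aa> \<inter> invariants \<Delta> R" for \<aa> x y
  proof -
    have aR: "\<aa> \<subseteq> R" using I unfolding alg_ideal_def by blast
    have "x * y \<in> \<aa>" "y * x \<in> \<aa>" using I x y unfolding alg_ideal_def by auto
    hence inA: "x * y - y * x \<in> \<aa>" using id_diff[OF I] by blast
    have "\<forall>\<delta>\<in>\<Delta>. \<delta> (x * y - y * x) = 0"
    proof
      fix \<delta> assume d: "\<delta> \<in> \<Delta>"
      then obtain a where a: "a \<in> A'" "\<delta> = ad a" unfolding \<Delta>_def by blast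
      have dy: "ad a y = 0" using y d a unfolding invariants_def by auto
      have dxR: "ad a x \<in> R" using adR a A'R x by blast
      have "ad a x \<in> invariants \<Delta> R" unfolding invariants_def
        using dxR N1_kill[of x \<Delta> \<delta>] x d a by auto
      hence c: "ad a x * y = y * ad a x" using C y unfolding commutative_set_def by blast
      have "ad a (x * y - y * x) = ad a x * y + x * ad a y - (ad a y * x + y * ad a x)"
        unfolding ad_def by (simp add: algebra_simps)
      thus "\<delta> (x * y - y * x) = 0" using a dy c by simp
    qed
    moreover have "x * y - y * x \<in> R" using inA aR by blast
    ultimately show ?thesis using inA unfolding invariants_def by blast
  qed
  have Q2: "\<forall>\<aa>. alg_ideal sc \<aa> R \<longrightarrow> \<aa> \<noteq> {0} \<longrightarrow>
           \<aa> \<inter> (R \<inter> N_i \<Delta> UNIV 0) = \<aa> \<inter> invariants \<Delta> R \<and>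
           R \<inter> N_i \<Delta> UNIV 0 = invariants \<Delta> R \<and>
           A \<subseteq> invariants \<Delta> R \<and>
           alg_ideal sc (\<aa> \<inter> invariants \<Delta> R) (invariants \<Delta> R) \<and>
           \<aa> \<inter> invariants \<Delta> R \<noteq> {0} \<and>
           two_sided_prod R (\<aa> \<inter> invariants \<Delta> R) \<inter> invariants \<Delta> R
             = \<aa> \<inter> invariants \<Delta> R"
    by (intro allI impI, rule P2)
  have Q3: "\<forall>\<aa>. alg_ideal sc \<aa> R \<longrightarrow> \<aa> \<noteq> {0} \<longrightarrow>
           commutative_set (invariants \<Delta> R) \<longrightarrow>
           (\<forall>x \<in> R \<inter> N_i \<Delta> UNIV 1. \<forall>y \<in> \<aa> \<inter> invariants \<Delta> R.
              x * y - y * x \<in> \<aa> \<inter> invariants \<Delta> R)"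
    by (intro allI impI ballI, rule P3)
  have Q1: "locally_nilpotent sc \<Delta> R" unfolding locally_nilpotent_def using der LN by (rule conjI)
  have Q0: "\<forall>i. N_i \<Delta> R i = R \<inter> N_i \<Delta> UNIV i" using Ni by (rule allI)
  show ?thesis using Q0 Q1 Q2 Q3 by (intro conjI)
qed

end
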